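(* The extended Rota-Baxter algebra $(\text{Ш}_e(\mathbf{k}),\diamond,P_{\mathbf{k}})$ of weight $(\lambda,\kappa)$ is the initial object in the category of commutative extended Rota-Baxter algebras of weight $(\lambda,\kappa)$: for any commutative extended Rota-Baxter algebra $(R,P)$ of weight $(\lambda,\kappa)$ there exists a unique extended Rota-Baxter algebra homomorphism $\bar f:(\text{Ш}_e(\mathbf{k}),\diamond,P_{\mathbf{k}})\to(R,P)$.
   Context: $\mathbf{k}$ is a commutative unitary ring, $\lambda,\kappa\in\mathbf{k}$. An extended Rota-Baxter operator of weight $(\lambda,\kappa)$ on an algebra $R$ is a linear $P:R\to R$ with $P(x)P(y)=P(xP(y))+P(P(x)y)+\lambda P(xy)+\kappa xy$; homomorphisms are algebra homomorphisms commuting with the operators. $\text{Ш}_e(\mathbf{k})=\bigoplus_{n\ge0}\mathbf{k}\,\mathbf{1}^{\otimes(n+1)}$ with product $\mathbf{1}^{\otimes(m+1)}\diamond\mathbf{1}^{\otimes(n+1)}=\sum_{r=0}^{\min\{m,n\}}\sum_{i=0}^{r}\binom{m+n-r}{m}\binom{m}{r}\binom{r}{i}\lambda^{r-i}\kappa^i\mathbf{1}^{\otimes(m+n+1-r-i)}$, and $P_{\mathbf{k}}(\mathbf{1}^{\otimes n})=\mathbf{1}^{\otimes (n+1)}$. This is the free commutative extended Rota-Baxter algebra of weight $(\lambda,\kappa)$ on $\mathbf{k}$. *)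

theory Defs
  imports Main
begin

text \<open>Elements of Sha_e(k) are represented by their coefficient functions
  a :: nat \<Rightarrow> 'k, where a n is the coefficient of the basis vector 1^(n+1)
  (tensor power with n+1 factors); they must have finite support.\<close>

definition sha_carrier :: "(nat \<Rightarrow> 'k::comm_ring_1) set" where
  "sha_carrier = {a. finite {n. a n \<noteq> 0}}"

definition sha_basis :: "nat \<Rightarrow> nat \<Rightarrow> 'k::comm_ring_1" where
  "sha_basis n = (\<lambda>i. if i = n then 1 else 0)"

definition sha_add :: "(nat \<Rightarrow> 'k::comm_ring_1) \<Rightarrow> (nat \<Rightarrow> 'k) \<Rightarrow> nat \<Rightarrow> 'k" where
  "sha_add a b = (\<lambda>n. a n + b n)"

definition sha_smult :: "'k::comm_ring_1 \<Rightarrow> (nat \<Rightarrow> 'k) \<Rightarrow> nat \<Rightarrow> 'k" where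
  "sha_smult c a = (\<lambda>n. c * a n)"

text \<open>Coefficient of 1^(p+1) in the product 1^(m+1) \<diamond> 1^(n+1), with weight (l, k).\<close>
definition sha_coeff :: "'k::comm_ring_1 \<Rightarrow> 'k \<Rightarrow> nat \<Rightarrow> nat \<Rightarrow> nat \<Rightarrow> 'k" where
  "sha_coeff l k m n p =
     (\<Sum>r\<le>min m n. \<Sum>i\<le>r.
        if m + n - r - i = p
        then of_nat ((m + n - r) choose m) * of_nat (m choose r) * of_nat (r choose i)
             * l ^ (r - i) * k ^ i
        else 0)"

definition sha_mult :: "'k::comm_ring_1 \<Rightarrow> 'k \<Rightarrow> (nat \<Rightarrow> 'k) \<Rightarrow> (nat \<Rightarrow> 'k) \<Rightarrow> nat \<Rightarrow> 'k" where
  "sha_mult l k a b = (\<lambda>p. \<Sum>m\<in>{m. a m \<noteq> 0}. \<Sum>n\<in>{n. b n \<noteq> 0}. a m * b n * sha_coeff l k m n p)"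

definition sha_P :: "(nat \<Rightarrow> 'k::comm_ring_1) \<Rightarrow> nat \<Rightarrow> 'k" where
  "sha_P a = (\<lambda>p. if p = 0 then 0 else a (p - 1))"

text \<open>A commutative (unital) k-algebra R is given by a commutative ring 'r together with
  a unital ring homomorphism iota : k \<rightarrow> R (scalar action c\<cdot>x = iota c * x).\<close>
definition k_algebra_map :: "('k::comm_ring_1 \<Rightarrow> 'r::comm_ring_1) \<Rightarrow> bool" where
  "k_algebra_map iota \<longleftrightarrow> iota 1 = 1 \<and> (\<forall>x y. iota (x + y) = iota x + iota y)
     \<and> (\<forall>x y. iota (x * y) = iota x * iota y)"

definition ext_rota_baxter ::
  "('k::comm_ring_1 \<Rightarrow> 'r::comm_ring_1) \<Rightarrow> 'k \<Rightarrow> 'k \<Rightarrow> ('r \<Rightarrow> 'r) \<Rightarrow> bool" where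
  "ext_rota_baxter iota l k P \<longleftrightarrow>
     (\<forall>x y. P (x + y) = P x + P y) \<and>
     (\<forall>c x. P (iota c * x) = iota c * P x) \<and>
     (\<forall>x y. P x * P y = P (x * P y) + P (P x * y) + iota l * P (x * y) + iota k * (x * y))"

text \<open>Homomorphism of extended Rota-Baxter k-algebras from Sha_e(k) to (R, P)
  (only its values on the carrier of Sha_e(k) matter).\<close>
definition sha_hom ::
  "('k::comm_ring_1 \<Rightarrow> 'r::comm_ring_1) \<Rightarrow> 'k \<Rightarrow> 'k \<Rightarrow> ('r \<Rightarrow> 'r) \<Rightarrow> ((nat \<Rightarrow> 'k) \<Rightarrow> 'r) \<Rightarrow> bool" where
  "sha_hom iota l k P g \<longleftrightarrow>
     (\<forall>a\<in>sha_carrier. \<forall>b\<in>sha_carrier. g (sha_add a b) = g a + g b) \<and>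
     (\<forall>c. \<forall>a\<in>sha_carrier. g (sha_smult c a) = iota c * g a) \<and>
     (\<forall>a\<in>sha_carrier. \<forall>b\<in>sha_carrier. g (sha_mult l k a b) = g a * g b) \<and>
     g (sha_basis 0) = 1 \<and>
     (\<forall>a\<in>sha_carrier. g (sha_P a) = P (g a))"

end

theory Submission
  imports Defs
begin
definition DD :: "nat \<Rightarrow> nat \<Rightarrow> nat \<Rightarrow> nat \<Rightarrow> nat" where
  "DD m n a b = ((m + n - (a + b)) choose m) * (m choose (a + b)) * ((a + b) choose b)"

lemma DD_zero: "m < a + b \<or> n < a + b \<Longrightarrow> DD m n a b = 0"
  unfolding DD_def by (auto simp: binomial_eq_0)

lemma DD_fact:
  assumes "a + b \<le> m" "a + b \<le> n"
  shows "DD m n a b * (fact a * fact b * fact (m - (a + b)) * fact (n - (a + b))) = (fact (m + n - (a + b)) :: nat)"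
proof -
  define s where "s = a + b"
  have 1: "fact b * fact a * ((a + b) choose b) = (fact s :: nat)"
    using binomial_fact_lemma[of b "a+b"] by (simp add: s_def)
  have 2: "fact s * fact (m - s) * (m choose s) = (fact m :: nat)"
    using binomial_fact_lemma[of s m] assms by (simp add: s_def)
  have 3: "fact m * fact (m + n - s - m) * ((m + n - s) choose m) = (fact (m + n - s) :: nat)"
    using binomial_fact_lemma[of m "m + n - s"] assms by (simp add: s_def)
  have e: "m + n - s - m = n - s" by simp
  have "DD m n a b * (fact a * fact b * fact (m - s) * fact (n - s))
      = ((m + n - s) choose m) * fact (n - s) * ((m choose s) * fact (m - s) * (((a + b) choose b) * fact b * fact a))"
    unfolding DD_def s_def by (simp only: ac_simps)
  also have "\<dots> = ((m + n - s) choose m) * fact (n - s) * ((m choose s) * fact (m - s) * fact s)"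
    using 1 by (simp only: ac_simps)
  also have "\<dots> = ((m + n - s) choose m) * fact (n - s) * fact m"
    using 2 by (simp only: ac_simps)
  also have "\<dots> = fact (m + n - s)"
    using 3 e by (simp only: ac_simps)
  finally show ?thesis by (simp add: s_def)
qed

lemma fact_red: "(x::nat) > 0 \<Longrightarrow> D * (p * fact (x - 1) * q) = r \<Longrightarrow> D * (p * fact x * q) = x * (r::nat)"
proof -
  assume x: "x > 0" and h: "D * (p * fact (x - 1) * q) = r"
  have f: "fact x = x * (fact (x - 1) :: nat)" using x by (cases x) simp_all
  show ?thesis unfolding f h[symmetric] by (simp only: ac_simps)
qed
lemma G:
  fixes D0 D1 D2 D3 D4 a b x y :: nat
  assumes h0: "D0 * (fact a * fact b * fact x * fact y) = fact (a + b + x + y)"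
    and h1: "x > 0 \<Longrightarrow> D1 * (fact a * fact b * fact (x - 1) * fact y) = fact (a + b + x + y - 1)"
    and h1': "x = 0 \<Longrightarrow> D1 = 0"
    and h2: "y > 0 \<Longrightarrow> D2 * (fact a * fact b * fact x * fact (y - 1)) = fact (a + b + x + y - 1)"
    and h2': "y = 0 \<Longrightarrow> D2 = 0"
    and h3: "a > 0 \<Longrightarrow> D3 * (fact (a - 1) * fact b * fact x * fact y) = fact (a + b + x + y - 1)"
    and h3': "a = 0 \<Longrightarrow> D3 = 0"
    and h4: "b > 0 \<Longrightarrow> D4 * (fact a * fact (b - 1) * fact x * fact y) = fact (a + b + x + y - 1)"
    and h4': "b = 0 \<Longrightarrow> D4 = 0"
    and T: "a + b + x + y > 0"
  shows "D0 = D1 + D2 + D3 + D4"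
proof -
  define F :: nat where "F = fact a * fact b * fact x * fact y"
  define T where "T = a + b + x + y"
  have F0: "F \<noteq> 0" unfolding F_def by simp
  have e1: "D1 * F = x * fact (T - 1)"
  proof (cases "x = 0")
    case False
    have f: "fact x = x * (fact (x - 1) :: nat)" using False by (cases x) simp_all
    have "D1 * F = x * (D1 * (fact a * fact b * fact (x - 1) * fact y))"
      unfolding F_def f by (simp only: ac_simps)
    also have "\<dots> = x * fact (T - 1)" using h1 False unfolding T_def by simp
    finally show ?thesis .
  qed (simp add: h1')
  have e2: "D2 * F = y * fact (T - 1)"
  proof (cases "y = 0")
    case False
    have f: "fact y = y * (fact (y - 1) :: nat)" using False by (cases y) simp_all
    have "D2 * F = y * (D2 * (fact a * fact b * fact x * fact (y - 1)))"
      unfolding F_def f by (simp only: ac_simps)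
    also have "\<dots> = y * fact (T - 1)" using h2 False unfolding T_def by simp
    finally show ?thesis .
  qed (simp add: h2')
  have e3: "D3 * F = a * fact (T - 1)"
  proof (cases "a = 0")
    case False
    have f: "fact a = a * (fact (a - 1) :: nat)" using False by (cases a) simp_all
    have "D3 * F = a * (D3 * (fact (a - 1) * fact b * fact x * fact y))"
      unfolding F_def f by (simp only: ac_simps)
    also have "\<dots> = a * fact (T - 1)" using h3 False unfolding T_def by simp
    finally show ?thesis .
  qed (simp add: h3')
  have e4: "D4 * F = b * fact (T - 1)"
  proof (cases "b = 0")
    case False
    have f: "fact b = b * (fact (b - 1) :: nat)" using False by (cases b) simp_all
    have "D4 * F = b * (D4 * (fact a * fact (b - 1) * fact x * fact y))"
      unfolding F_def f by (simp only: ac_simps)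
    also have "\<dots> = b * fact (T - 1)" using h4 False unfolding T_def by simp
    finally show ?thesis .
  qed (simp add: h4')
  have "(D1 + D2 + D3 + D4) * F = (x + y + a + b) * fact (T - 1)"
    by (simp only: distrib_right e1 e2 e3 e4)
  also have "\<dots> = T * fact (T - 1)" by (simp add: T_def)
  also have "\<dots> = fact T" using T unfolding T_def by (cases "a + b + x + y") simp_all
  finally have "(D1 + D2 + D3 + D4) * F = D0 * F" using h0 by (simp add: F_def T_def)
  then show ?thesis using F0 by simp
qed

lemma DD_rec:
  "DD (Suc m) (Suc n) a b = DD m (Suc n) a b + DD (Suc m) n a b
     + (if 0 < a then DD m n (a - 1) b else 0) + (if 0 < b then DD m n a (b - 1) else 0)"
proof (cases "a + b \<le> Suc m \<and> a + b \<le> Suc n")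
  case False
  then have h: "Suc m < a + b \<or> Suc n < a + b" by auto
  have "DD (Suc m) (Suc n) a b = 0" "DD m (Suc n) a b = 0" "DD (Suc m) n a b = 0"
    using False by (auto intro!: DD_zero)
  moreover have "0 < a \<Longrightarrow> DD m n (a - 1) b = 0" using h by (intro DD_zero) auto
  moreover have "0 < b \<Longrightarrow> DD m n a (b - 1) = 0" using h by (intro DD_zero) auto
  ultimately show ?thesis by (cases "0 < a"; cases "0 < b"; simp only: if_True if_False; simp)
next
  case True
  define x where "x = Suc m - (a + b)"
  define y where "y = Suc n - (a + b)"
  have sm: "a + b \<le> Suc m" and sn: "a + b \<le> Suc n" using True by auto
  show ?thesis
  proof (rule G[of _ a b x y])
    have e: "Suc m + Suc n - (a + b) = a + b + x + y" "Suc m - (a + b) = x" "Suc n - (a + b) = y"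
      using sm sn by (auto simp: x_def y_def)
    show "DD (Suc m) (Suc n) a b * (fact a * fact b * fact x * fact y) = fact (a + b + x + y)"
      using DD_fact[OF sm sn] unfolding e .
  next
    assume x: "0 < x"
    have le: "a + b \<le> m" using x sm by (simp add: x_def)
    have e: "m + Suc n - (a + b) = a + b + x + y - 1" "m - (a + b) = x - 1" "Suc n - (a + b) = y"
      using sm sn x by (auto simp: x_def y_def)
    show "DD m (Suc n) a b * (fact a * fact b * fact (x - 1) * fact y) = fact (a + b + x + y - 1)"
      using DD_fact[OF le sn] unfolding e .
  next
    assume "x = 0" then show "DD m (Suc n) a b = 0" using sm by (intro DD_zero) (simp add: x_def)
  next
    assume y: "0 < y"
    have le: "a + b \<le> n" using y sn by (simp add: y_def)
    have e: "Suc m + n - (a + b) = a + b + x + y - 1" "n - (a + b) = y - 1" "Suc m - (a + b) = x"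
      using sm sn y by (auto simp: x_def y_def)
    show "DD (Suc m) n a b * (fact a * fact b * fact x * fact (y - 1)) = fact (a + b + x + y - 1)"
      using DD_fact[OF sm le] unfolding e .
  next
    assume "y = 0" then show "DD (Suc m) n a b = 0" using sn by (intro DD_zero) (simp add: y_def)
  next
    assume a: "0 < a"
    have le1: "a - 1 + b \<le> m" and le2: "a - 1 + b \<le> n" using a sm sn by auto
    have e: "m + n - (a - 1 + b) = a + b + x + y - 1" "m - (a - 1 + b) = x" "n - (a - 1 + b) = y"
      using sm sn a by (auto simp: x_def y_def)
    show "(if 0 < a then DD m n (a - 1) b else 0) * (fact (a - 1) * fact b * fact x * fact y) = fact (a + b + x + y - 1)"
      using DD_fact[OF le1 le2] a unfolding e by simp
  next
    assume "a = 0" then show "(if 0 < a then DD m n (a - 1) b else 0) = 0" by simp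
  next
    assume b: "0 < b"
    have le1: "a + (b - 1) \<le> m" and le2: "a + (b - 1) \<le> n" using b sm sn by auto
    have e: "m + n - (a + (b - 1)) = a + b + x + y - 1" "m - (a + (b - 1)) = x" "n - (a + (b - 1)) = y"
      using sm sn b by (auto simp: x_def y_def)
    show "(if 0 < b then DD m n a (b - 1) else 0) * (fact a * fact (b - 1) * fact x * fact y) = fact (a + b + x + y - 1)"
      using DD_fact[OF le1 le2] b unfolding e by simp
  next
    assume "b = 0" then show "(if 0 < b then DD m n a (b - 1) else 0) = 0" by simp
  next
    show "0 < a + b + x + y" using sm by (simp add: x_def)
  qed
qed

lemma shift_sum:
  "(\<Sum>a<Suc M. (if 0 < a then f (a - 1) else 0)) = (\<Sum>a<M. (f a :: 'a::comm_monoid_add))"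
  by (induction M) simp_all

lemma sum_trunc:
  fixes f :: "nat \<Rightarrow> 'a::comm_monoid_add"
  assumes "\<And>a. c \<le> a \<Longrightarrow> f a = 0" "c \<le> A"
  shows "sum f {..<A} = (sum f {..<c} :: 'a::comm_monoid_add)"
proof (rule sum.mono_neutral_right)
  show "finite {..<A}" by simp
  show "{..<c} \<subseteq> {..<A}" using assms(2) by auto
  show "\<forall>i\<in>{..<A} - {..<c}. f i = 0" using assms(1) by auto
qed

locale erb =
  fixes iota :: "'k::comm_ring_1 \<Rightarrow> 'r::comm_ring_1" and l k :: 'k and P :: "'r \<Rightarrow> 'r"
  assumes km: "k_algebra_map iota" and rb: "ext_rota_baxter iota l k P"
begin

lemma iota_add: "iota (x + y) = iota x + iota y" using km by (simp add: k_algebra_map_def)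
lemma iota_mult: "iota (x * y) = iota x * iota y" using km by (simp add: k_algebra_map_def)
lemma iota_one: "iota 1 = 1" using km by (simp add: k_algebra_map_def)
lemma iota_zero: "iota 0 = 0"
proof -
  have "iota (0 + 0) = iota 0 + iota 0" by (rule iota_add)
  then show ?thesis by simp
qed
lemma iota_of_nat: "iota (of_nat n) = of_nat n"
  by (induction n) (simp_all add: iota_zero iota_add iota_one)
lemma iota_power: "iota (x ^ n) = iota x ^ n"
  by (induction n) (simp_all add: iota_mult iota_one)
lemma iota_sum: "iota (sum f A) = (\<Sum>x\<in>A. iota (f x))"
  by (induction A rule: infinite_finite_induct) (simp_all add: iota_zero iota_add)

lemma P_add: "P (x + y) = P x + P y" using rb by (simp add: ext_rota_baxter_def)
lemma P_scal: "P (iota c * x) = iota c * P x" using rb by (simp add: ext_rota_baxter_def)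
lemma P_rb: "P x * P y = P (x * P y) + P (P x * y) + iota l * P (x * y) + iota k * (x * y)"
  using rb by (simp add: ext_rota_baxter_def)
lemma P_zero: "P 0 = 0"
proof -
  have "P (0 + 0) = P 0 + P 0" by (rule P_add)
  then show ?thesis by simp
qed
lemma P_sum: "P (sum f A) = (\<Sum>x\<in>A. P (f x))"
  by (induction A rule: infinite_finite_induct) (simp_all add: P_zero P_add)

definition u :: "nat \<Rightarrow> 'r" where "u n = (P ^^ n) 1"
lemma u_0: "u 0 = 1" by (simp add: u_def)
lemma u_Suc: "u (Suc n) = P (u n)" by (simp add: u_def)

lemma P_coef: "P (of_nat d * iota l ^ a * iota k ^ b * x) = of_nat d * iota l ^ a * iota k ^ b * P x"
proof -
  have "of_nat d * iota l ^ a * iota k ^ b = iota (of_nat d * l ^ a * k ^ b)"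
    by (simp add: iota_mult iota_power iota_of_nat)
  then show ?thesis using P_scal by metis
qed

definition cf :: "nat \<Rightarrow> nat \<Rightarrow> nat \<Rightarrow> nat \<Rightarrow> 'r" where
  "cf m n a b = of_nat (DD m n a b) * iota l ^ a * iota k ^ b * u (m + n - (a + 2 * b))"

definition W :: "nat \<Rightarrow> nat \<Rightarrow> nat \<Rightarrow> nat \<Rightarrow> 'r" where
  "W A B m n = (\<Sum>a<A. \<Sum>b<B. cf m n a b)"

lemma cf_zero: "min m n < a + b \<Longrightarrow> cf m n a b = 0"
proof -
  assume "min m n < a + b"
  then have "DD m n a b = 0" by (intro DD_zero) auto
  then show ?thesis unfolding cf_def by simp
qed

lemma W_indep:
  assumes "min m n < A" "min m n < B"
  shows "W A B m n = W (Suc (min m n)) (Suc (min m n)) m n"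
proof -
  let ?c = "Suc (min m n)"
  have "W A B m n = (\<Sum>a<A. \<Sum>b<?c. cf m n a b)"
    unfolding W_def by (rule sum.cong[OF refl], rule sum_trunc) (use assms cf_zero in auto)
  also have "\<dots> = (\<Sum>a<?c. \<Sum>b<?c. cf m n a b)"
    by (rule sum_trunc) (use assms cf_zero in auto)
  finally show ?thesis unfolding W_def .
qed

lemma cf_split:
  "cf (Suc m) (Suc n) a b = P (cf m (Suc n) a b) + P (cf (Suc m) n a b)
     + (if 0 < a then iota l * P (cf m n (a - 1) b) else 0)
     + (if 0 < b then iota k * cf m n a (b - 1) else 0)"
proof -
  let ?L = "iota l" and ?K = "iota k"
  let ?i = "Suc m + Suc n - (a + 2 * b)"
  have p1: "of_nat (DD m (Suc n) a b) * ?L ^ a * ?K ^ b * u ?i = P (cf m (Suc n) a b)"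
  proof (cases "DD m (Suc n) a b = 0")
    case False
    then have "a + b \<le> m" "a + b \<le> Suc n" using DD_zero[of m a b "Suc n"] by linarith+
    then have "?i = Suc (m + Suc n - (a + 2 * b))" by simp
    then show ?thesis unfolding cf_def P_coef by (simp add: u_Suc)
  qed (simp add: cf_def P_zero)
  have p2: "of_nat (DD (Suc m) n a b) * ?L ^ a * ?K ^ b * u ?i = P (cf (Suc m) n a b)"
  proof (cases "DD (Suc m) n a b = 0")
    case False
    then have "a + b \<le> n" "a + b \<le> Suc m" using DD_zero[of "Suc m" a b n] by linarith+
    then have "?i = Suc (Suc m + n - (a + 2 * b))" by simp
    then show ?thesis unfolding cf_def P_coef by (simp add: u_Suc)
  qed (simp add: cf_def P_zero)
  have p3: "of_nat (if 0 < a then DD m n (a - 1) b else 0) * ?L ^ a * ?K ^ b * u ?i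
      = (if 0 < a then ?L * P (cf m n (a - 1) b) else 0)"
  proof (cases "0 < a \<and> DD m n (a - 1) b \<noteq> 0")
    case True
    then have "a - 1 + b \<le> m" "a - 1 + b \<le> n" "0 < a" using DD_zero[of m "a - 1" b n] by linarith+
    then have e: "?i = Suc (m + n - (a - 1 + 2 * b))" by simp
    have e2: "?L ^ a = ?L * ?L ^ (a - 1)" using \<open>0 < a\<close> by (cases a) simp_all
    show ?thesis using True unfolding cf_def P_coef e e2 u_Suc by (simp add: ac_simps)
  next
    case False
    then show ?thesis by (auto simp: cf_def P_zero)
  qed
  have p4: "of_nat (if 0 < b then DD m n a (b - 1) else 0) * ?L ^ a * ?K ^ b * u ?i
      = (if 0 < b then ?K * cf m n a (b - 1) else 0)"
  proof (cases "0 < b")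
    case True
    then have e: "?i = m + n - (a + 2 * (b - 1))" by simp
    have e2: "?K ^ b = ?K * ?K ^ (b - 1)" using True by (cases b) simp_all
    show ?thesis using True unfolding cf_def e e2 by (simp add: ac_simps)
  qed simp
  have "cf (Suc m) (Suc n) a b =
     of_nat (DD m (Suc n) a b) * ?L ^ a * ?K ^ b * u ?i + of_nat (DD (Suc m) n a b) * ?L ^ a * ?K ^ b * u ?i
     + of_nat (if 0 < a then DD m n (a - 1) b else 0) * ?L ^ a * ?K ^ b * u ?i
     + of_nat (if 0 < b then DD m n a (b - 1) else 0) * ?L ^ a * ?K ^ b * u ?i"
    unfolding cf_def DD_rec[of m n a b] of_nat_add by (simp only: distrib_right)
  then show ?thesis unfolding p1 p2 p3 p4 .
qed

lemma W_split:
  "W (Suc N) (Suc N) (Suc m) (Suc n) = P (W (Suc N) (Suc N) m (Suc n)) + P (W (Suc N) (Suc N) (Suc m) n)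
     + iota l * P (W N (Suc N) m n) + iota k * W (Suc N) N m n"
proof -
  have "W (Suc N) (Suc N) (Suc m) (Suc n) =
     (\<Sum>a<Suc N. \<Sum>b<Suc N. P (cf m (Suc n) a b)) + (\<Sum>a<Suc N. \<Sum>b<Suc N. P (cf (Suc m) n a b))
     + (\<Sum>a<Suc N. \<Sum>b<Suc N. (if 0 < a then iota l * P (cf m n (a - 1) b) else 0))
     + (\<Sum>a<Suc N. \<Sum>b<Suc N. (if 0 < b then iota k * cf m n a (b - 1) else 0))"
    unfolding W_def cf_split by (simp only: sum.distrib)
  also have "(\<Sum>a<Suc N. \<Sum>b<Suc N. (if 0 < a then iota l * P (cf m n (a - 1) b) else 0))
      = (\<Sum>a<Suc N. (if 0 < a then (\<Sum>b<Suc N. iota l * P (cf m n (a - 1) b)) else 0))"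
    by (rule sum.cong) auto
  also have "\<dots> = (\<Sum>a<N. \<Sum>b<Suc N. iota l * P (cf m n a b))" by (rule shift_sum)
  also have "(\<Sum>a<Suc N. \<Sum>b<Suc N. (if 0 < b then iota k * cf m n a (b - 1) else 0))
      = (\<Sum>a<Suc N. \<Sum>b<N. iota k * cf m n a b)"
    by (rule sum.cong[OF refl], rule shift_sum)
  finally show ?thesis unfolding W_def P_sum sum_distrib_left .
qed

lemma DD_base1: "DD 0 n 0 0 = 1" by (simp add: DD_def)
lemma DD_base2: "DD m 0 0 0 = 1" by (simp add: DD_def)

lemma prod_u: "u m * u n = W (Suc (m + n)) (Suc (m + n)) m n"
proof (induction m arbitrary: n)
  case 0
  have "W (Suc n) (Suc n) 0 n = W 1 1 0 n" using W_indep[of 0 n "Suc n" "Suc n"] by simp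
  also have "\<dots> = u n" by (simp add: W_def cf_def DD_base1)
  finally show ?case by (simp add: u_0)
next
  case (Suc m)
  note IHm = Suc.IH
  show ?case
  proof (induction n)
    case 0
    have "W (Suc (Suc m + 0)) (Suc (Suc m + 0)) (Suc m) 0 = W 1 1 (Suc m) 0"
      using W_indep[of "Suc m" 0 "Suc (Suc m + 0)" "Suc (Suc m + 0)"] by simp
    also have "\<dots> = u (Suc m)" by (simp add: W_def cf_def DD_base2)
    finally show ?case by (simp add: u_0)
  next
    case (Suc n)
    note IHn = Suc.IH
    let ?N = "Suc (Suc (m + n))"
    have w1: "W (Suc ?N) (Suc ?N) m (Suc n) = u m * u (Suc n)"
      using IHm[of "Suc n"] W_indep[of m "Suc n" "Suc ?N" "Suc ?N"] W_indep[of m "Suc n" "Suc (m + Suc n)" "Suc (m + Suc n)"]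
      by simp
    have w2: "W (Suc ?N) (Suc ?N) (Suc m) n = u (Suc m) * u n"
      using IHn W_indep[of "Suc m" n "Suc ?N" "Suc ?N"] W_indep[of "Suc m" n "Suc (Suc m + n)" "Suc (Suc m + n)"]
      by simp
    have w3: "W ?N (Suc ?N) m n = u m * u n"
      using IHm[of n] W_indep[of m n "?N" "Suc ?N"] W_indep[of m n "Suc (m + n)" "Suc (m + n)"]
      by simp
    have w4: "W (Suc ?N) ?N m n = u m * u n"
      using IHm[of n] W_indep[of m n "Suc ?N" "?N"] W_indep[of m n "Suc (m + n)" "Suc (m + n)"]
      by simp
    have "u (Suc m) * u (Suc n) = P (u m * u (Suc n)) + P (u (Suc m) * u n) + iota l * P (u m * u n) + iota k * (u m * u n)"
      unfolding u_Suc by (rule P_rb)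
    also have "\<dots> = W (Suc ?N) (Suc ?N) (Suc m) (Suc n)"
      unfolding W_split w1 w2 w3 w4 ..
    also have "\<dots> = W (Suc (Suc m + Suc n)) (Suc (Suc m + Suc n)) (Suc m) (Suc n)"
      using W_indep[of "Suc m" "Suc n" "Suc ?N" "Suc ?N"] W_indep[of "Suc m" "Suc n" "Suc (Suc m + Suc n)" "Suc (Suc m + Suc n)"]
      by simp
    finally show ?case .
  qed
qed


lemma coef_link:
  assumes "i \<le> r" "r \<le> min m n"
  shows "iota (of_nat ((m + n - r) choose m) * of_nat (m choose r) * of_nat (r choose i) * l ^ (r - i) * k ^ i)
           * u (m + n - r - i) = cf m n (r - i) i"
proof -
  have e1: "r - i + i = r" using assms by simp
  have e2: "m + n - (r - i + 2 * i) = m + n - r - i" using assms by simp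
  show ?thesis unfolding cf_def DD_def e1 e2
    by (simp add: iota_mult iota_power iota_of_nat)
qed

lemma tri_sum:
  "(\<Sum>r\<le>min m n. \<Sum>i\<le>r. cf m n (r - i) i) = W (Suc (min m n)) (Suc (min m n)) m n"
proof -
  let ?M = "min m n"
  let ?S = "SIGMA r:{..?M}. {..r}"
  let ?T = "{(a, b). a + b \<le> ?M}"
  have "(\<Sum>r\<le>?M. \<Sum>i\<le>r. cf m n (r - i) i) = (\<Sum>(r, i)\<in>?S. cf m n (r - i) i)"
    by (rule sum.Sigma) auto
  also have "\<dots> = (\<Sum>(a, b)\<in>?T. cf m n a b)"
    by (rule sum.reindex_bij_witness[where i = "\<lambda>(a, b). (a + b, b)" and j = "\<lambda>(r, i). (r - i, i)"])
       auto
  also have "\<dots> = (\<Sum>(a, b)\<in>{..<Suc ?M} \<times> {..<Suc ?M}. cf m n a b)"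
    by (rule sum.mono_neutral_left) (auto intro: cf_zero)
  also have "\<dots> = W (Suc ?M) (Suc ?M) m n"
    unfolding W_def by (rule sum.cartesian_product[symmetric])
  finally show ?thesis .
qed

lemma iota_if: "iota (if c then x else 0) = (if c then iota x else 0)"
  by (simp add: iota_zero)

lemma link:
  assumes fin: "finite S" and sub: "{..m + n} \<subseteq> S"
  shows "(\<Sum>p\<in>S. iota (sha_coeff l k m n p) * u p) = u m * u n"
proof -
  let ?M = "min m n"
  define c where "c r i = of_nat ((m + n - r) choose m) * of_nat (m choose r) * of_nat (r choose i) * l ^ (r - i) * k ^ i" for r i
  have "(\<Sum>p\<in>S. iota (sha_coeff l k m n p) * u p)
      = (\<Sum>p\<in>S. \<Sum>r\<le>?M. \<Sum>i\<le>r. (if m + n - r - i = p then iota (c r i) * u p else 0))"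
    unfolding sha_coeff_def iota_sum iota_if c_def sum_distrib_right
    by (rule sum.cong[OF refl], rule sum.cong[OF refl], rule sum.cong[OF refl]) (simp add: diff_diff_add)
  also have "\<dots> = (\<Sum>r\<le>?M. \<Sum>i\<le>r. \<Sum>p\<in>S. (if m + n - r - i = p then iota (c r i) * u p else 0))"
    by (subst sum.swap) (subst sum.swap, rule refl)
  also have "\<dots> = (\<Sum>r\<le>?M. \<Sum>i\<le>r. iota (c r i) * u (m + n - r - i))"
  proof -
    have inS: "m + n - r - i \<in> S" for r i using sub by auto
    show ?thesis using fin inS by (intro sum.cong refl) simp
  qed
  also have "\<dots> = (\<Sum>r\<le>?M. \<Sum>i\<le>r. cf m n (r - i) i)"
    unfolding c_def by (intro sum.cong refl coef_link) auto
  also have "\<dots> = W (Suc ?M) (Suc ?M) m n" by (rule tri_sum)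
  also have "\<dots> = W (Suc (m + n)) (Suc (m + n)) m n"
    using W_indep[of m n "Suc (m + n)" "Suc (m + n)"] by simp
  also have "\<dots> = u m * u n" by (rule prod_u[symmetric])
  finally show ?thesis .
qed


definition gg :: "(nat \<Rightarrow> 'k) \<Rightarrow> 'r" where
  "gg c = (\<Sum>p\<in>{p. c p \<noteq> 0}. iota (c p) * u p)"

lemma gg_sup:
  assumes "finite S" "{p. c p \<noteq> 0} \<subseteq> S"
  shows "gg c = (\<Sum>p\<in>S. iota (c p) * u p)"
  unfolding gg_def by (rule sum.mono_neutral_left) (use assms in \<open>auto simp: iota_zero\<close>)

lemma sc_zero: "m + n < p \<Longrightarrow> sha_coeff l k m n p = 0"
  unfolding sha_coeff_def by (intro sum.neutral ballI) auto

lemma gg_add: "a \<in> sha_carrier \<Longrightarrow> b \<in> sha_carrier \<Longrightarrow> gg (sha_add a b) = gg a + gg b"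
proof -
  assume a: "a \<in> sha_carrier" and b: "b \<in> sha_carrier"
  let ?S = "{p. a p \<noteq> 0} \<union> {p. b p \<noteq> 0}"
  have fin: "finite ?S" using a b by (simp add: sha_carrier_def)
  have "gg (sha_add a b) = (\<Sum>p\<in>?S. iota (sha_add a b p) * u p)"
    by (rule gg_sup[OF fin]) (auto simp: sha_add_def)
  also have "\<dots> = (\<Sum>p\<in>?S. iota (a p) * u p) + (\<Sum>p\<in>?S. iota (b p) * u p)"
    by (simp add: sha_add_def iota_add distrib_right sum.distrib)
  also have "\<dots> = gg a + gg b"
  proof -
    have "gg a = (\<Sum>p\<in>?S. iota (a p) * u p)" by (rule gg_sup[OF fin]) auto
    moreover have "gg b = (\<Sum>p\<in>?S. iota (b p) * u p)" by (rule gg_sup[OF fin]) auto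
    ultimately show ?thesis by simp
  qed
  finally show ?thesis .
qed

lemma gg_smult: "a \<in> sha_carrier \<Longrightarrow> gg (sha_smult c a) = iota c * gg a"
proof -
  assume a: "a \<in> sha_carrier"
  let ?S = "{p. a p \<noteq> 0}"
  have fin: "finite ?S" using a by (simp add: sha_carrier_def)
  have "gg (sha_smult c a) = (\<Sum>p\<in>?S. iota (sha_smult c a p) * u p)"
    by (rule gg_sup[OF fin]) (auto simp: sha_smult_def)
  also have "\<dots> = iota c * (\<Sum>p\<in>?S. iota (a p) * u p)"
    by (simp add: sha_smult_def iota_mult sum_distrib_left ac_simps)
  also have "\<dots> = iota c * gg a" using fin by (simp add: gg_sup)
  finally show ?thesis .
qed

lemma gg_basis0: "gg (sha_basis 0) = 1"
proof -
  have "gg (sha_basis 0) = (\<Sum>p\<in>{0}. iota (sha_basis 0 p) * u p)"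
    by (rule gg_sup) (auto simp: sha_basis_def)
  then show ?thesis by (simp add: sha_basis_def iota_one u_0)
qed

lemma gg_P: "a \<in> sha_carrier \<Longrightarrow> gg (sha_P a) = P (gg a)"
proof -
  assume a: "a \<in> sha_carrier"
  let ?S = "{p. a p \<noteq> 0}"
  have fin: "finite ?S" using a by (simp add: sha_carrier_def)
  have "gg (sha_P a) = (\<Sum>p\<in>Suc ` ?S. iota (sha_P a p) * u p)"
  proof (rule gg_sup)
    show "finite (Suc ` ?S)" using fin by simp
    show "{p. sha_P a p \<noteq> 0} \<subseteq> Suc ` ?S"
    proof
      fix p assume "p \<in> {p. sha_P a p \<noteq> 0}"
      then have "p \<noteq> 0" "a (p - 1) \<noteq> 0" by (auto simp: sha_P_def split: if_splits)
      then show "p \<in> Suc ` ?S" by (intro image_eqI[of p Suc "p - 1"]) auto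
    qed
  qed
  also have "\<dots> = (\<Sum>q\<in>?S. iota (a q) * P (u q))"
    by (subst sum.reindex) (auto simp: sha_P_def u_Suc)
  also have "\<dots> = P (gg a)"
    unfolding gg_def P_sum P_scal ..
  finally show ?thesis .
qed

lemma gg_mult: "a \<in> sha_carrier \<Longrightarrow> b \<in> sha_carrier \<Longrightarrow> gg (sha_mult l k a b) = gg a * gg b"
proof -
  assume a: "a \<in> sha_carrier" and b: "b \<in> sha_carrier"
  let ?Sa = "{p. a p \<noteq> 0}" and ?Sb = "{p. b p \<noteq> 0}"
  let ?S = "\<Union>m\<in>?Sa. \<Union>n\<in>?Sb. {..m + n}"
  have fa: "finite ?Sa" and fb: "finite ?Sb" using a b by (simp_all add: sha_carrier_def)
  have fin: "finite ?S" using fa fb by auto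
  have "gg (sha_mult l k a b) = (\<Sum>p\<in>?S. iota (sha_mult l k a b p) * u p)"
  proof (rule gg_sup[OF fin], rule subsetI)
    fix p assume "p \<in> {p. sha_mult l k a b p \<noteq> 0}"
    then have "(\<Sum>m\<in>?Sa. \<Sum>n\<in>?Sb. a m * b n * sha_coeff l k m n p) \<noteq> 0"
      by (simp add: sha_mult_def)
    then obtain m where m: "m \<in> ?Sa" and "(\<Sum>n\<in>?Sb. a m * b n * sha_coeff l k m n p) \<noteq> 0"
      by (meson sum.neutral)
    then obtain n where n: "n \<in> ?Sb" and "a m * b n * sha_coeff l k m n p \<noteq> 0"
      by (meson sum.neutral)
    then have "sha_coeff l k m n p \<noteq> 0" by auto
    then have "p \<le> m + n" using sc_zero[of m n p] by linarith
    then show "p \<in> ?S" using m n by blast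
  qed
  also have "\<dots> = (\<Sum>p\<in>?S. \<Sum>m\<in>?Sa. \<Sum>n\<in>?Sb. (iota (a m) * iota (b n)) * (iota (sha_coeff l k m n p) * u p))"
    unfolding sha_mult_def iota_sum sum_distrib_right by (intro sum.cong refl) (simp add: iota_mult ac_simps)
  also have "\<dots> = (\<Sum>m\<in>?Sa. \<Sum>n\<in>?Sb. (iota (a m) * iota (b n)) * (\<Sum>p\<in>?S. iota (sha_coeff l k m n p) * u p))"
    by (subst sum.swap) (simp add: sum_distrib_left sum.swap[of _ ?S])
  also have "\<dots> = (\<Sum>m\<in>?Sa. \<Sum>n\<in>?Sb. (iota (a m) * iota (b n)) * (u m * u n))"
  proof (intro sum.cong refl)
    fix m n assume "m \<in> ?Sa" "n \<in> ?Sb"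
    then have "{..m + n} \<subseteq> ?S" by blast
    then show "iota (a m) * iota (b n) * (\<Sum>p\<in>?S. iota (sha_coeff l k m n p) * u p) = iota (a m) * iota (b n) * (u m * u n)"
      using link[OF fin] by simp
  qed
  also have "\<dots> = (\<Sum>m\<in>?Sa. iota (a m) * u m) * (\<Sum>n\<in>?Sb. iota (b n) * u n)"
    by (simp add: sum_product ac_simps)
  also have "\<dots> = gg a * gg b" by (simp add: gg_def)
  finally show ?thesis .
qed

lemma gg_hom: "sha_hom iota l k P gg"
  unfolding sha_hom_def using gg_add gg_smult gg_mult gg_basis0 gg_P by blast

lemma basis_carrier: "sha_basis n \<in> sha_carrier"
  unfolding sha_carrier_def sha_basis_def by simp

lemma basis_Suc: "sha_basis (Suc n) = sha_P (sha_basis n)"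
  unfolding sha_basis_def sha_P_def by (rule ext) auto

lemma uniq:
  assumes h: "sha_hom iota l k P h" and a: "a \<in> sha_carrier"
  shows "h a = gg a"
proof -
  have hadd: "\<And>x y. x \<in> sha_carrier \<Longrightarrow> y \<in> sha_carrier \<Longrightarrow> h (sha_add x y) = h x + h y"
    and hsm: "\<And>c x. x \<in> sha_carrier \<Longrightarrow> h (sha_smult c x) = iota c * h x"
    and hb0: "h (sha_basis 0) = 1"
    and hP: "\<And>x. x \<in> sha_carrier \<Longrightarrow> h (sha_P x) = P (h x)"
    using h unfolding sha_hom_def by auto
  have hb: "h (sha_basis n) = u n" for n
    by (induction n) (simp_all add: hb0 u_0 u_Suc basis_Suc hP basis_carrier)
  have z: "(\<lambda>_. 0) \<in> sha_carrier" by (simp add: sha_carrier_def)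
  have hz: "h (\<lambda>_. 0) = 0"
  proof -
    have "sha_add (\<lambda>_. 0) (\<lambda>_. 0) = (\<lambda>_::nat. 0::'k)" by (simp add: sha_add_def)
    then have "h (\<lambda>_. 0) = h (\<lambda>_. 0) + h (\<lambda>_. 0)" using hadd[OF z z] by simp
    then show ?thesis by simp
  qed
  have main: "h (\<lambda>p. if p \<in> F then a p else 0) = (\<Sum>n\<in>F. iota (a n) * u n)" if "finite F" for F
    using that
  proof (induction F rule: finite_induct)
    case empty
    then show ?case using hz by simp
  next
    case (insert x F)
    have c1: "(\<lambda>p. if p \<in> F then a p else 0) \<in> sha_carrier"
      unfolding sha_carrier_def mem_Collect_eq by (rule finite_subset[OF _ insert(1)]) auto
    have c2: "sha_smult (a x) (sha_basis x) \<in> sha_carrier"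
      unfolding sha_carrier_def sha_smult_def sha_basis_def mem_Collect_eq
      by (rule finite_subset[of _ "{x}"]) auto
    have "(\<lambda>p. if p \<in> insert x F then a p else 0)
        = sha_add (sha_smult (a x) (sha_basis x)) (\<lambda>p. if p \<in> F then a p else 0)"
      using insert(2) by (auto simp: sha_add_def sha_smult_def sha_basis_def)
    then have "h (\<lambda>p. if p \<in> insert x F then a p else 0)
        = iota (a x) * u x + (\<Sum>n\<in>F. iota (a n) * u n)"
      using hadd[OF c2 c1] hsm[OF basis_carrier] hb insert(3) by simp
    then show ?case using insert(1,2) by simp
  qed
  have fa: "finite {p. a p \<noteq> 0}" using a by (simp add: sha_carrier_def)
  have "a = (\<lambda>p. if p \<in> {p. a p \<noteq> 0} then a p else 0)" by auto
  then have "h a = (\<Sum>n\<in>{p. a p \<noteq> 0}. iota (a n) * u n)" using main[OF fa] by metis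
  then show ?thesis by (simp add: gg_def)
qed

end

theorem corollary3p5:
  fixes iota :: "'k::comm_ring_1 \<Rightarrow> 'r::comm_ring_1"
    and l k :: 'k and P :: "'r \<Rightarrow> 'r"
  assumes "k_algebra_map iota"
    and "ext_rota_baxter iota l k P"
  shows "\<exists>g. sha_hom iota l k P g \<and>
           (\<forall>h. sha_hom iota l k P h \<longrightarrow> (\<forall>a\<in>sha_carrier. h a = g a))"
proof -
  interpret erb iota l k P using assms by unfold_locales
  show ?thesis using gg_hom uniq by blast
qed

end
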